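(* Assume the time-triggered learning rule with integer parameter $a\ge2$ and conditions (i) $\mathcal{S}(\theta_p,\theta_q)\ne\emptyset$ for all distinct $\theta_p,\theta_q\in\Theta$, (ii) $\mathcal{G}$ strongly connected, (iii) $\pi_{i,0}(\theta)>0,\mu_{i,0}(\theta)>0$ for all $i,\theta$. Let $\theta\in\Theta\setminus\{\theta^\star\}$ and $v\in\mathcal{S}(\theta^\star,\theta)$. Then for each agent $i\in\mathcal{V}$, $$\liminf_{t\to\infty}-\frac{\log\mu_{i,t}(\theta)}{t}\ \ge\ \frac{K_v(\theta^\star,\theta)}{a^{\,d(v,i)+1}}\quad\text{a.s.}$$
   Context: Agents $\mathcal{V}=\{1,\dots,n\}$ interact over a directed graph $\mathcal{G}=(\mathcal{V},\mathcal{E})$; $(j,i)\in\mathcal{E}$ means $j$ can send to $i$, and $\mathcal{N}_i=\{j:(j,i)\in\mathcal{E}\}$; $d(v,i)$ is the length of a shortest directed path from $v$ to $i$ ($d(i,i)=0$). $\Theta=\{\theta_1,\dots,\theta_m\}$ finite hypotheses, $\theta^\star$ the fixed true state. Agent $i$ has finite signal space $\mathcal{S}_i$ and known marginals $l_i(\cdot|\theta)$ of joint likelihoods $l(\cdot|\theta)$ on $\prod_i\mathcal{S}_i$, with $l_i(w_i|\theta)>0$ for all $w_i,\theta$. Profiles $s_t$ ($t\in\mathbb{N}_+$) are i.i.d. over time with law $l(\cdot|\theta^\star)$; "a.s." is w.r.t. the product measure $\mathbb{P}^{\theta^\star}$. $K_i(\theta_p,\theta_q)=D(l_i(\cdot|\theta_p)\|l_i(\cdot|\theta_q))$;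 $\mathcal{S}(\theta_p,\theta_q)=\{i:K_i(\theta_p,\theta_q)>0\}$. Rule with parameter $a\in\mathbb{N}_+$: $\mathbb{I}=\{t_k\}_{k\in\mathbb{N}_+}$, $t_1=1$, $t_{k+1}-t_k=a^k$. For all $t\in\mathbb{N}$: $\pi_{i,t+1}(\theta)=\dfrac{l_i(s_{i,t+1}|\theta)\pi_{i,t}(\theta)}{\sum_p l_i(s_{i,t+1}|\theta_p)\pi_{i,t}(\theta_p)}$; if $t+1\in\mathbb{I}$, $\mu_{i,t+1}(\theta)=\dfrac{\min\{\{\mu_{j,t}(\theta)\}_{j\in\mathcal{N}_i},\pi_{i,t+1}(\theta)\}}{\sum_p\min\{\{\mu_{j,t}(\theta_p)\}_{j\in\mathcal{N}_i},\pi_{i,t+1}(\theta_p)\}}$; otherwise $\mu_{i,t+1}(\theta)=\mu_{i,t}(\theta)$. *)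

theory Defs
  imports "HOL-Probability.Probability"
begin

text \<open>Agents: a finite type 'v.  Hypotheses: a finite type 'h.
  Signals of every agent live in a common type 's; agent i's signal space is S i.
  A signal profile is a function 'v \<Rightarrow> 's.  L \<theta> is the joint likelihood
  l(.|\<theta>) as a pmf on profiles.\<close>

definition marg :: "('h \<Rightarrow> ('v \<Rightarrow> 's) pmf) \<Rightarrow> 'v \<Rightarrow> 's \<Rightarrow> 'h \<Rightarrow> real" where
  "marg L i w \<theta> = pmf (map_pmf (\<lambda>f. f i) (L \<theta>)) w"

definition KL :: "('h \<Rightarrow> ('v \<Rightarrow> 's) pmf) \<Rightarrow> ('v \<Rightarrow> 's set) \<Rightarrow> 'v \<Rightarrow> 'h \<Rightarrow> 'h \<Rightarrow> real" where
  "KL L S i p q = (\<Sum>w\<in>S i. marg L i w p * ln (marg L i w p / marg L i w q))"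

definition informative :: "('h \<Rightarrow> ('v \<Rightarrow> 's) pmf) \<Rightarrow> ('v \<Rightarrow> 's set) \<Rightarrow> 'h \<Rightarrow> 'h \<Rightarrow> 'v set" where
  "informative L S p q = {i. KL L S i p q > 0}"

definition neighbors :: "('v \<times> 'v) set \<Rightarrow> 'v \<Rightarrow> 'v set" where
  "neighbors E i = {j. (j, i) \<in> E}"

definition strongly_connected :: "('v \<times> 'v) set \<Rightarrow> bool" where
  "strongly_connected E \<longleftrightarrow> (\<forall>u w. (u, w) \<in> E\<^sup>*)"

definition dist_g :: "('v \<times> 'v) set \<Rightarrow> 'v \<Rightarrow> 'v \<Rightarrow> nat" where
  "dist_g E v i = (LEAST k. (v, i) \<in> E ^^ k)"

text \<open>Trigger times: trig a k = t_{k+1}; t_1 = 1, t_{k+1} - t_k = a^k.\<close>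
fun trig :: "nat \<Rightarrow> nat \<Rightarrow> nat" where
  "trig a 0 = 1"
| "trig a (Suc k) = trig a k + a ^ Suc k"

definition triggers :: "nat \<Rightarrow> nat set" where
  "triggers a = range (trig a)"

text \<open>Local Bayesian belief \<pi>_{i,t}; \<omega> (t+1) is the signal profile s_{t+1}.\<close>
fun pib :: "('h \<Rightarrow> ('v \<Rightarrow> 's) pmf) \<Rightarrow> ('v \<Rightarrow> 'h \<Rightarrow> real) \<Rightarrow> (nat \<Rightarrow> 'v \<Rightarrow> 's)
            \<Rightarrow> nat \<Rightarrow> 'v \<Rightarrow> 'h::finite \<Rightarrow> real" where
  "pib L pi0 \<omega> 0 i \<theta> = pi0 i \<theta>"
| "pib L pi0 \<omega> (Suc t) i \<theta> =
     marg L i (\<omega> (Suc t) i) \<theta> * pib L pi0 \<omega> t i \<theta> /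
     (\<Sum>p\<in>UNIV. marg L i (\<omega> (Suc t) i) p * pib L pi0 \<omega> t i p)"

fun mub :: "('h \<Rightarrow> ('v \<Rightarrow> 's) pmf) \<Rightarrow> ('v \<times> 'v) set \<Rightarrow> nat \<Rightarrow> ('v \<Rightarrow> 'h \<Rightarrow> real)
            \<Rightarrow> ('v \<Rightarrow> 'h \<Rightarrow> real) \<Rightarrow> (nat \<Rightarrow> 'v \<Rightarrow> 's) \<Rightarrow> nat \<Rightarrow> 'v \<Rightarrow> 'h::finite \<Rightarrow> real" where
  "mub L E a pi0 mu0 \<omega> 0 i \<theta> = mu0 i \<theta>"
| "mub L E a pi0 mu0 \<omega> (Suc t) i \<theta> =
     (if Suc t \<in> triggers a then
        Min (insert (pib L pi0 \<omega> (Suc t) i \<theta>) ((\<lambda>j. mub L E a pi0 mu0 \<omega> t j \<theta>) ` neighbors E i)) /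
        (\<Sum>p\<in>UNIV. Min (insert (pib L pi0 \<omega> (Suc t) i p) ((\<lambda>j. mub L E a pi0 mu0 \<omega> t j p) ` neighbors E i)))
      else mub L E a pi0 mu0 \<omega> t i \<theta>)"

text \<open>Law of the i.i.d. sequence of profiles (index 0 is unused).\<close>
definition iid_law :: "('v \<Rightarrow> 's) pmf \<Rightarrow> (nat \<Rightarrow> 'v \<Rightarrow> 's) measure" where
  "iid_law p = PiM UNIV (\<lambda>_. measure_pmf p)"

end

theory Submission
  imports Defs "HOL-Real_Asymp.Real_Asymp"
begin


lemma iid_indep:
  fixes P :: "'a pmf"
  shows "prob_space.indep_vars (PiM UNIV (\<lambda>_::nat. measure_pmf P)) (\<lambda>_. measure_pmf P) (\<lambda>i \<omega>. \<omega> i) UNIV"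
proof -
  let ?M = "PiM UNIV (\<lambda>_::nat. measure_pmf P)"
  interpret prob_space ?M by (rule prob_space_PiM) (simp add: measure_pmf.prob_space_axioms)
  show ?thesis
  proof (subst indep_vars_iff_distr_eq_PiM')
    show "distr ?M (Pi\<^sub>M UNIV (\<lambda>i. measure_pmf P)) (\<lambda>x. \<lambda>i\<in>UNIV. x i) =
    Pi\<^sub>M UNIV (\<lambda>i. distr ?M (measure_pmf P) (\<lambda>\<omega>. \<omega> i))"
      by (subst distr_PiM_component) (auto simp: measure_pmf.prob_space_axioms restrict_UNIV distr_id)
  qed auto
qed




lemma slln_fixed_eps:
  fixes P :: "'a pmf" and g :: "'a \<Rightarrow> real" and \<epsilon> :: real
  assumes fin: "finite (set_pmf P)" and eps: "\<epsilon> > 0"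
  shows "AE \<omega> in PiM UNIV (\<lambda>_::nat. measure_pmf P).
           eventually (\<lambda>n. real n * (measure_pmf.expectation P g - \<epsilon>) \<le> (\<Sum>s\<in>{1..n}. g (\<omega> s))) sequentially"
proof -
  let ?M = "PiM UNIV (\<lambda>_::nat. measure_pmf P)"
  interpret prob_space ?M by (rule prob_space_PiM) (simp add: measure_pmf.prob_space_axioms)
  define lo where "lo = Min (g ` set_pmf P) - 1"
  define hi where "hi = Max (g ` set_pmf P) + 1"
  have ne: "set_pmf P \<noteq> {}" by (simp add: set_pmf_not_empty)
  have lohi: "lo < hi" using fin ne unfolding lo_def hi_def
    by (smt (verit) Max_ge Min_le ex_in_conv finite_imageI imageI)
  have inint: "g x \<in> {lo..hi}" if "x \<in> set_pmf P" for x
  proof -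
    have "Min (g ` set_pmf P) \<le> g x" "g x \<le> Max (g ` set_pmf P)" using fin that by auto
    then show ?thesis unfolding lo_def hi_def by auto
  qed
  define X where "X = (\<lambda>s (\<omega>::nat \<Rightarrow> 'a). g (\<omega> s))"
  define Y where "Y = (\<lambda>\<omega>::nat \<Rightarrow> 'a. g (\<omega> 0))"
  have comp: "distr ?M (measure_pmf P) (\<lambda>\<omega>. \<omega> i) = measure_pmf P" for i
    by (rule distr_PiM_component) (auto simp: measure_pmf.prob_space_axioms)
  have distrX: "distr ?M borel (X i) = distr (measure_pmf P) borel g" for i
  proof -
    have "distr ?M borel (X i) = distr (distr ?M (measure_pmf P) (\<lambda>\<omega>. \<omega> i)) borel g"
      by (subst distr_distr) (auto simp: X_def comp_def)
    then show ?thesis by (simp add: comp)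
  qed
  have EY: "expectation Y = measure_pmf.expectation P g"
  proof -
    have "expectation Y = integral\<^sup>L (distr ?M (measure_pmf P) (\<lambda>\<omega>. \<omega> 0)) g"
      by (subst integral_distr) (auto simp: Y_def)
    then show ?thesis by (simp add: comp)
  qed
  have AEY: "AE x in ?M. Y x \<in> {lo..hi}"
  proof -
    have "AE x in measure_pmf P. g x \<in> {lo..hi}" by (simp add: AE_measure_pmf_iff inint del: atLeastAtMost_iff)
    then show ?thesis unfolding Y_def
      by (rule AE_PiM_component[where I=UNIV and M="\<lambda>_. measure_pmf P", rotated 2]) (simp_all add: measure_pmf.prob_space_axioms)
  qed
  have indepX: "indep_vars (\<lambda>_. borel) X I" for I
  proof -
    have "indep_vars (\<lambda>_. borel) (\<lambda>i \<omega>. g (\<omega> i)) UNIV"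
      by (rule indep_vars_compose2[OF iid_indep]) auto
    then show ?thesis unfolding X_def by (rule indep_vars_subset) auto
  qed
  have gm[measurable]: "(\<lambda>x. g (x i)) \<in> borel_measurable ?M" for i
    by (rule measurable_compose[OF measurable_component_singleton]) auto
  have YX: "Y = X 0" by (simp add: X_def Y_def)
  have rvX: "X i \<in> borel_measurable ?M" for i unfolding X_def by (rule gm)
  define A where "A = (\<lambda>n. {x\<in>space ?M. (\<Sum>i\<in>{1..n}. X i x) / real n \<le> expectation Y - \<epsilon>})"
  define c where "c = 2 * \<epsilon>\<^sup>2 / (hi - lo)\<^sup>2"
  have cpos: "c > 0" using eps lohi unfolding c_def by auto
  have bound: "prob (A n) \<le> exp (-c) ^ n" if "n \<ge> 1" for n
  proof -
    interpret H: Hoeffding_ineq_iid ?M "{1..n}" X Y lo hi "expectation Y"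
      by unfold_locales (use AEY in \<open>simp_all add: indepX distrX YX rvX\<close>)
    have "prob (A n) \<le> exp (-2 * real (card {1..n}) * \<epsilon>\<^sup>2 / (hi - lo)\<^sup>2)"
      unfolding A_def using H.Hoeffding_ineq_le'[of \<epsilon>] eps lohi that  by simp
    also have "-2 * real (card {1..n}) * \<epsilon>\<^sup>2 / (hi - lo)\<^sup>2 = real n * (-c)"
      by (simp add: c_def)
    also have "exp (real n * (-c)) = exp (-c) ^ n" by (rule exp_of_nat_mult)
    finally show ?thesis .
  qed
  have meas: "A n \<in> sets ?M" for n unfolding A_def X_def by measurable
  have summ: "summable (\<lambda>n. measure ?M (A n))"
  proof (rule summable_comparison_test')
    show "summable (\<lambda>n. exp (-c) ^ n)" using cpos by (intro summable_geometric) auto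
    show "norm (measure ?M (A n)) \<le> exp (-c) ^ n" if "n \<ge> 1" for n using bound[OF that] by simp
  qed
  have "AE x in ?M. eventually (\<lambda>n. x \<in> space ?M - A n) sequentially"
    by (rule borel_cantelli_AE1) (auto simp: meas summ less_top[symmetric] emeasure_finite)
  then show ?thesis
  proof (rule eventually_mono)
    fix x assume "eventually (\<lambda>n. x \<in> space ?M - A n) sequentially"
    then have "eventually (\<lambda>n. x \<in> space ?M - A n \<and> n \<ge> 1) sequentially"
      using eventually_ge_at_top[of 1] by eventually_elim auto
    then show "eventually (\<lambda>n. real n * (measure_pmf.expectation P g - \<epsilon>) \<le> (\<Sum>s\<in>{1..n}. g (x s))) sequentially"
    proof eventually_elim
      case (elim n)
      then have "\<not> (\<Sum>i\<in>{1..n}. X i x) / real n \<le> expectation Y - \<epsilon>" unfolding A_def by auto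
      with elim show ?case by (auto simp: EY X_def field_simps)
    qed
  qed
qed

lemma slln_lower:
  fixes P :: "'a pmf" and g :: "'a \<Rightarrow> real"
  assumes fin: "finite (set_pmf P)"
  shows "AE \<omega> in PiM UNIV (\<lambda>_::nat. measure_pmf P). \<forall>\<epsilon>>0.
           eventually (\<lambda>n. real n * (measure_pmf.expectation P g - \<epsilon>) \<le> (\<Sum>s\<in>{1..n}. g (\<omega> s))) sequentially"
proof -
  have "AE \<omega> in PiM UNIV (\<lambda>_::nat. measure_pmf P). \<forall>m::nat.
           eventually (\<lambda>n. real n * (measure_pmf.expectation P g - 1 / Suc m) \<le> (\<Sum>s\<in>{1..n}. g (\<omega> s))) sequentially"
    by (subst AE_all_countable, intro allI, rule slln_fixed_eps[OF fin]) simp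
  then show ?thesis
  proof (rule eventually_mono, intro allI impI)
    fix \<omega> and \<epsilon> :: real
    assume H: "\<forall>m::nat. eventually (\<lambda>n. real n * (measure_pmf.expectation P g - 1 / Suc m) \<le> (\<Sum>s\<in>{1..n}. g (\<omega> s))) sequentially"
      and e: "\<epsilon> > 0"
    obtain m :: nat where m: "1 / Suc m < \<epsilon>"
      using e by (metis nat_approx_posE)
    show "eventually (\<lambda>n. real n * (measure_pmf.expectation P g - \<epsilon>) \<le> (\<Sum>s\<in>{1..n}. g (\<omega> s))) sequentially"
      using H[rule_format, of m]
    proof eventually_elim
      case (elim n)
      have "real n * (measure_pmf.expectation P g - \<epsilon>) \<le> real n * (measure_pmf.expectation P g - 1 / Suc m)"
        using m by (intro mult_left_mono) auto
      with elim show ?case by linarith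
    qed
  qed
qed




lemma trig_closed: "a \<ge> 1 \<Longrightarrow> (a - 1) * trig a k + 1 = a ^ Suc k"
proof (induction k)
  case 0 then show ?case by simp
next
  case (Suc k)
  have "(a - 1) * trig a (Suc k) + 1 = ((a - 1) * trig a k + 1) + (a - 1) * a ^ Suc k"
    by (simp add: algebra_simps)
  also have "\<dots> = a ^ Suc k + (a - 1) * a ^ Suc k" using Suc by simp
  also have "\<dots> = a ^ Suc (Suc k)" using Suc.prems
    by (cases a) (auto simp: algebra_simps)
  finally show ?case .
qed

lemma trig_real: "a \<ge> 2 \<Longrightarrow> real (trig a k) = (real a ^ Suc k - 1) / (real a - 1)"
proof -
  assume a: "a \<ge> 2"
  have "real ((a - 1) * trig a k + 1) = real (a ^ Suc k)" using trig_closed[of a k] a by simp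
  then have "(real a - 1) * real (trig a k) + 1 = real a ^ Suc k" using a by (simp add: of_nat_diff)
  then show ?thesis using a by (simp add: field_simps)
qed

lemma trig_ge1: "trig a k \<ge> 1"
  by (induction k) auto

lemma trig_mono_Suc: "a \<ge> 1 \<Longrightarrow> trig a k < trig a (Suc k)"
  by simp

lemma trig_strict_mono: "a \<ge> 1 \<Longrightarrow> strict_mono (trig a)"
  by (rule strict_monoI_Suc) simp

lemma trig_ge_k: "a \<ge> 1 \<Longrightarrow> trig a k \<ge> k"
proof (induction k)
  case (Suc k)
  have "1 \<le> a ^ Suc k" using Suc.prems by (rule one_le_power)
  then have h: "Suc k \<le> trig a k + a ^ Suc k" using Suc.IH[OF Suc.prems] by linarith
  then show ?case by (simp only: trig.simps)
qed simp

lemma trig_shift_le: "a \<ge> 2 \<Longrightarrow> real (trig a (k + m)) \<le> real a ^ m * real (trig a k) + real (trig a m)"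
proof -
  assume a: "a \<ge> 2"
  have a1: "real a - 1 > 0" using a by simp
  have "real a ^ m \<le> real a ^ Suc m" using a by simp
  then have "real a ^ Suc (k + m) - 1 \<le> real a ^ m * (real a ^ Suc k - 1) + (real a ^ Suc m - 1)"
    by (simp add: algebra_simps power_add)
  then have "(real a ^ Suc (k + m) - 1) / (real a - 1) \<le> (real a ^ m * (real a ^ Suc k - 1) + (real a ^ Suc m - 1)) / (real a - 1)"
    using a1 by (intro divide_right_mono) auto
  then show ?thesis using a1 by (simp add: trig_real[OF a] add_divide_distrib)
qed

lemma trig_window_exists:
  assumes a: "a \<ge> 1" and t: "t \<ge> 1"
  shows "\<exists>k. trig a k \<le> t \<and> t < trig a (Suc k)"
proof -
  have "Suc t \<le> trig a (Suc t)" by (rule trig_ge_k[OF a])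
  then have ex: "\<exists>k. t < trig a k" by (intro exI[of _ "Suc t"]) (simp del: trig.simps)
  define k' where "k' = (LEAST k. t < trig a k)"
  have k': "t < trig a k'" unfolding k'_def by (rule LeastI_ex[OF ex])
  have "k' \<noteq> 0"
  proof
    assume "k' = 0" with t k' show False by simp
  qed
  then obtain k where kk: "k' = Suc k" by (cases k') auto
  have "\<not> t < trig a k" using kk unfolding k'_def by (metis Suc_n_not_le_n Least_le)
  then show ?thesis using k' kk by (intro exI[of _ k]) simp
qed

lemma trig_in_triggers: "trig a k \<in> triggers a"
  by (simp add: triggers_def)

lemma not_trigger_between:
  assumes a: "a \<ge> 1" and "trig a k < s" "s < trig a (Suc k)"
  shows "s \<notin> triggers a"
proof
  assume "s \<in> triggers a"
  then obtain m where m: "s = trig a m" by (auto simp: triggers_def)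
  have sm: "strict_mono (trig a)" by (rule trig_strict_mono[OF a])
  from assms m have "k < m" using sm by (metis strict_mono_less)
  moreover from assms m have "m < Suc k" using sm by (metis strict_mono_less)
  ultimately show False by simp
qed



lemma exp_small: "\<delta> > 0 \<Longrightarrow> c > 0 \<Longrightarrow> eventually (\<lambda>t::nat. exp (-\<delta> * real t) \<le> c) sequentially"
proof -
  assume d: "\<delta> > 0" and c: "c > 0"
  have "(\<lambda>t::nat. exp (-\<delta> * real t)) \<longlonglongrightarrow> 0" using d by real_asymp
  from order_tendstoD(2)[OF this c] show ?thesis by eventually_elim simp
qed



definition Dprop :: "('h \<Rightarrow> ('v \<Rightarrow> 's) pmf) \<Rightarrow> ('v \<times> 'v) set \<Rightarrow> nat \<Rightarrow> ('v \<Rightarrow> 'h \<Rightarrow> real) \<Rightarrow> ('v \<Rightarrow> 'h \<Rightarrow> real) \<Rightarrow> (nat \<Rightarrow> 'v \<Rightarrow> 's) \<Rightarrow> 'h::finite \<Rightarrow> real \<Rightarrow> 'v \<Rightarrow> nat \<Rightarrow> bool" where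
  "Dprop L E a pi0 mu0 \<omega> \<theta> K j d = (\<forall>y<K. eventually (\<lambda>k. \<forall>t. trig a (k+d) \<le> t \<and> t < trig a (Suc (k+d)) \<longrightarrow> mub L E a pi0 mu0 \<omega> t j \<theta> \<le> exp (-y * real (trig a k))) sequentially)"


definition fb :: "('h \<Rightarrow> ('v \<Rightarrow> 's) pmf) \<Rightarrow> ('v \<Rightarrow> 'h \<Rightarrow> real) \<Rightarrow> ('v \<Rightarrow> 'h \<Rightarrow> real) \<Rightarrow> (nat \<Rightarrow> 'v \<Rightarrow> 's) \<Rightarrow> 'h::finite \<Rightarrow> nat \<Rightarrow> real" where
  "fb L pi0 mu0 \<omega> \<theta>s s = (if s = 0 then Min (range (\<lambda>j. mu0 j \<theta>s)) else Min (range (\<lambda>j. pib L pi0 \<omega> s j \<theta>s)))"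

definition beta where "beta L pi0 mu0 \<omega> \<theta>s t = Min (fb L pi0 mu0 \<omega> \<theta>s ` {..t})"

definition GG :: "('h \<Rightarrow> ('v \<Rightarrow> 's) pmf) \<Rightarrow> (nat \<Rightarrow> 'v \<Rightarrow> 's) \<Rightarrow> 'h \<Rightarrow> 'v \<Rightarrow> 'h \<Rightarrow> nat \<Rightarrow> real" where
  "GG L \<omega> \<theta>s j q t = (\<Sum>s\<in>{1..t}. ln (marg L j (\<omega> s j) \<theta>s / marg L j (\<omega> s j) q))"

declare pib.simps(2)[simp del]

context
  fixes L :: "'h::finite \<Rightarrow> ('v::finite \<Rightarrow> 's) pmf" and S :: "'v \<Rightarrow> 's set"
    and E :: "('v \<times> 'v) set" and a :: nat and pi0 mu0 :: "'v \<Rightarrow> 'h \<Rightarrow> real"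
    and \<omega> :: "nat \<Rightarrow> 'v \<Rightarrow> 's" and \<theta>s :: 'h
  assumes good: "\<And>t j. \<omega> t j \<in> S j"
    and pos_lik: "\<And>j w h. w \<in> S j \<Longrightarrow> marg L j w h > 0"
    and pi0_pos: "\<And>j h. pi0 j h > 0" and pi0_sum: "\<And>j. (\<Sum>h\<in>UNIV. pi0 j h) = 1"
    and mu0_pos: "\<And>j h. mu0 j h > 0"
    and a1: "a \<ge> 1"
begin

lemma lik_pos: "marg L j (\<omega> t j) h > 0"
  using pos_lik good by blast

lemma pib_pos_sum: "(\<forall>p. pib L pi0 \<omega> t j p > 0) \<and> (\<Sum>p\<in>UNIV. pib L pi0 \<omega> t j p) = 1"
proof (induction t)
  case 0 then show ?case using pi0_pos pi0_sum by simp
next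
  case (Suc t)
  define D where "D = (\<Sum>p\<in>UNIV. marg L j (\<omega> (Suc t) j) p * pib L pi0 \<omega> t j p)"
  have D: "D > 0" unfolding D_def using Suc lik_pos by (intro sum_pos) (auto intro: mult_pos_pos)
  have eq: "pib L pi0 \<omega> (Suc t) j p = marg L j (\<omega> (Suc t) j) p * pib L pi0 \<omega> t j p / D" for p
    by (simp add: D_def pib.simps)
  have "\<forall>p. pib L pi0 \<omega> (Suc t) j p > 0" unfolding eq using Suc lik_pos D by (auto intro: divide_pos_pos mult_pos_pos)
  moreover have "(\<Sum>p\<in>UNIV. pib L pi0 \<omega> (Suc t) j p) = 1"
    unfolding eq using D by (simp add: sum_divide_distrib[symmetric] D_def[symmetric])
  ultimately show ?case by blast
qed

lemma pib_pos: "pib L pi0 \<omega> t j p > 0" using pib_pos_sum by blast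
lemma pib_sum: "(\<Sum>p\<in>UNIV. pib L pi0 \<omega> t j p) = 1" using pib_pos_sum by blast
lemma pib_le1: "pib L pi0 \<omega> t j p \<le> 1"
proof -
  have "pib L pi0 \<omega> t j p \<le> (\<Sum>p\<in>UNIV. pib L pi0 \<omega> t j p)"
    by (rule member_le_sum) (auto intro: less_imp_le pib_pos)
  then show ?thesis by (simp add: pib_sum)
qed

lemma GG_Suc: "GG L \<omega> \<theta>s j q (Suc t) = GG L \<omega> \<theta>s j q t + ln (marg L j (\<omega> (Suc t) j) \<theta>s / marg L j (\<omega> (Suc t) j) q)"
  unfolding GG_def by (simp add: atLeastAtMostSuc_conv add.commute)

lemma pib_ratio: "pib L pi0 \<omega> t j q = pib L pi0 \<omega> t j \<theta>s * (pi0 j q / pi0 j \<theta>s) * exp (- GG L \<omega> \<theta>s j q t)"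
proof (induction t)
  case 0 then show ?case using pi0_pos[of j \<theta>s] by (simp add: GG_def)
next
  case (Suc t)
  define D where "D = (\<Sum>p\<in>UNIV. marg L j (\<omega> (Suc t) j) p * pib L pi0 \<omega> t j p)"
  define lq where "lq = marg L j (\<omega> (Suc t) j) q"
  define ls where "ls = marg L j (\<omega> (Suc t) j) \<theta>s"
  have lq: "lq > 0" and ls: "ls > 0" unfolding lq_def ls_def by (rule lik_pos)+
  have eq: "pib L pi0 \<omega> (Suc t) j p = marg L j (\<omega> (Suc t) j) p * pib L pi0 \<omega> t j p / D" for p
    by (simp add: D_def pib.simps)
  have ex: "exp (- GG L \<omega> \<theta>s j q (Suc t)) = exp (- GG L \<omega> \<theta>s j q t) * lq / ls"
  proof -
    have e: "exp (ln (ls / lq)) = ls / lq" using lq ls by simp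
    have "exp (- (GG L \<omega> \<theta>s j q t + ln (ls / lq))) = exp (- GG L \<omega> \<theta>s j q t) / exp (ln (ls / lq))"
      by (simp add: exp_diff[symmetric])
    then show ?thesis unfolding GG_Suc ls_def[symmetric] lq_def[symmetric]
      using e lq ls by simp
  qed
  show ?case
    unfolding eq ex using Suc.IH lq ls by (simp add: lq_def[symmetric] ls_def[symmetric] field_simps)
qed

lemma Min_pos_set:
  assumes "x > 0" "\<forall>y\<in>A. y > (0::real)" "finite A"
  shows "Min (insert x A) > 0"
  using assms by (subst Min_gr_iff) auto

lemma mub_pos: "mub L E a pi0 mu0 \<omega> t j p > 0"
proof (induction t arbitrary: j p)
  case 0 then show ?case using mu0_pos by simp
next
  case (Suc t)
  have num: "Min (insert (pib L pi0 \<omega> (Suc t) j' p') ((\<lambda>k. mub L E a pi0 mu0 \<omega> t k p') ` neighbors E j')) > 0" for j' p'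
    using Suc.IH pib_pos by (intro Min_pos_set) auto
  have den: "(\<Sum>p'\<in>UNIV. Min (insert (pib L pi0 \<omega> (Suc t) j p') ((\<lambda>k. mub L E a pi0 mu0 \<omega> t k p') ` neighbors E j))) > 0"
    using num by (intro sum_pos) auto
  show ?case using num den Suc.IH by simp
qed

definition Zn where "Zn t j = (\<Sum>p\<in>UNIV. Min (insert (pib L pi0 \<omega> (Suc t) j p) ((\<lambda>k. mub L E a pi0 mu0 \<omega> t k p) ` neighbors E j)))"

lemma Zn_pos: "Zn t j > 0"
  unfolding Zn_def using mub_pos pib_pos by (intro sum_pos Min_pos_set) auto

lemma Zn_le1: "Zn t j \<le> 1"
proof -
  have "Zn t j \<le> (\<Sum>p\<in>UNIV. pib L pi0 \<omega> (Suc t) j p)"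
    unfolding Zn_def by (intro sum_mono Min_le) auto
  then show ?thesis by (simp add: pib_sum)
qed

lemma Zn_ge_term: "Zn t j \<ge> Min (insert (pib L pi0 \<omega> (Suc t) j p) ((\<lambda>k. mub L E a pi0 mu0 \<omega> t k p) ` neighbors E j))"
  unfolding Zn_def using mub_pos pib_pos by (intro member_le_sum less_imp_le Min_pos_set) auto

lemma mub_trig: "Suc t \<in> triggers a \<Longrightarrow> mub L E a pi0 mu0 \<omega> (Suc t) j p =
   Min (insert (pib L pi0 \<omega> (Suc t) j p) ((\<lambda>k. mub L E a pi0 mu0 \<omega> t k p) ` neighbors E j)) / Zn t j"
  by (simp add: Zn_def)

lemma mub_trig_le_pi: "Suc t \<in> triggers a \<Longrightarrow> mub L E a pi0 mu0 \<omega> (Suc t) j p \<le> pib L pi0 \<omega> (Suc t) j p / Zn t j"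
  unfolding mub_trig using Zn_pos by (intro divide_right_mono Min_le) (auto intro: less_imp_le)

lemma mub_trig_le_nb: "Suc t \<in> triggers a \<Longrightarrow> k \<in> neighbors E j \<Longrightarrow>
    mub L E a pi0 mu0 \<omega> (Suc t) j p \<le> mub L E a pi0 mu0 \<omega> t k p / Zn t j"
  unfolding mub_trig using Zn_pos by (intro divide_right_mono Min_le) (auto intro: less_imp_le)

lemma fb_pos: "fb L pi0 mu0 \<omega> \<theta>s s > 0"
  unfolding fb_def using mu0_pos pib_pos by (auto simp: Min_gr_iff)

lemma beta_pos: "beta L pi0 mu0 \<omega> \<theta>s t > 0"
  unfolding beta_def using fb_pos by (auto simp: Min_gr_iff)

lemma beta_le_fb: "s \<le> t \<Longrightarrow> beta L pi0 mu0 \<omega> \<theta>s t \<le> fb L pi0 mu0 \<omega> \<theta>s s"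
  unfolding beta_def by (intro Min_le) auto

lemma beta_mono: "s \<le> t \<Longrightarrow> beta L pi0 mu0 \<omega> \<theta>s t \<le> beta L pi0 mu0 \<omega> \<theta>s s"
  unfolding beta_def by (intro Min_antimono) auto

lemma beta_le_pib: "t \<ge> 1 \<Longrightarrow> beta L pi0 mu0 \<omega> \<theta>s t \<le> pib L pi0 \<omega> t j \<theta>s"
proof -
  assume t: "t \<ge> 1"
  have "beta L pi0 mu0 \<omega> \<theta>s t \<le> fb L pi0 mu0 \<omega> \<theta>s t" by (rule beta_le_fb) simp
  also have "\<dots> \<le> pib L pi0 \<omega> t j \<theta>s" using t unfolding fb_def by (auto intro!: Min_le)
  finally show ?thesis .
qed

lemma Min_ge_set: "finite A \<Longrightarrow> (b::real) \<le> x \<Longrightarrow> \<forall>y\<in>A. b \<le> y \<Longrightarrow> b \<le> Min (insert x A)"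
  by (subst Min_ge_iff) auto

lemma mub_ge_beta: "mub L E a pi0 mu0 \<omega> t j \<theta>s \<ge> beta L pi0 mu0 \<omega> \<theta>s t"
proof (induction t arbitrary: j)
  case 0
  have "beta L pi0 mu0 \<omega> \<theta>s 0 \<le> fb L pi0 mu0 \<omega> \<theta>s 0" by (rule beta_le_fb) simp
  also have "\<dots> \<le> mu0 j \<theta>s" unfolding fb_def by (auto intro!: Min_le)
  finally show ?case by simp
next
  case (Suc t)
  have bm: "beta L pi0 mu0 \<omega> \<theta>s (Suc t) \<le> beta L pi0 mu0 \<omega> \<theta>s t" by (rule beta_mono) simp
  show ?case
  proof (cases "Suc t \<in> triggers a")
    case True
    define m where "m = Min (insert (pib L pi0 \<omega> (Suc t) j \<theta>s) ((\<lambda>k. mub L E a pi0 mu0 \<omega> t k \<theta>s) ` neighbors E j))"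
    have mpos: "m > 0" unfolding m_def using mub_pos pib_pos by (intro Min_pos_set) auto
    have "beta L pi0 mu0 \<omega> \<theta>s (Suc t) \<le> m" unfolding m_def
      using Suc.IH bm beta_le_pib[of "Suc t" j] by (intro Min_ge_set) (auto intro: order.trans)
    also have "m \<le> m / Zn t j" using mpos Zn_pos Zn_le1 by (simp add: le_divide_eq)
    also have "m / Zn t j = mub L E a pi0 mu0 \<omega> (Suc t) j \<theta>s" using mub_trig[OF True] m_def by simp
    finally show ?thesis .
  next
    case False
    then show ?thesis using Suc.IH[of j] bm by simp
  qed
qed

lemma Zn_ge_beta: "Zn t j \<ge> beta L pi0 mu0 \<omega> \<theta>s (Suc t)"
proof -
  have bm: "beta L pi0 mu0 \<omega> \<theta>s (Suc t) \<le> beta L pi0 mu0 \<omega> \<theta>s t" by (rule beta_mono) simp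
  have "beta L pi0 mu0 \<omega> \<theta>s (Suc t) \<le> Min (insert (pib L pi0 \<omega> (Suc t) j \<theta>s) ((\<lambda>k. mub L E a pi0 mu0 \<omega> t k \<theta>s) ` neighbors E j))"
    using mub_ge_beta bm beta_le_pib[of "Suc t" j] by (intro Min_ge_set) (auto intro: order.trans)
  also have "\<dots> \<le> Zn t j" by (rule Zn_ge_term)
  finally show ?thesis .
qed

lemma mub_trig_le_pi_beta: "Suc t \<in> triggers a \<Longrightarrow>
    mub L E a pi0 mu0 \<omega> (Suc t) j p \<le> pib L pi0 \<omega> (Suc t) j p / beta L pi0 mu0 \<omega> \<theta>s (Suc t)"
  using mub_trig_le_pi[of t j p] Zn_ge_beta[of t j] beta_pos[of "Suc t"] pib_pos[of "Suc t" j p]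
  by (meson divide_left_mono less_imp_le mult_pos_pos order.trans Zn_pos)

lemma mub_trig_le_nb_beta: "Suc t \<in> triggers a \<Longrightarrow> k \<in> neighbors E j \<Longrightarrow>
    mub L E a pi0 mu0 \<omega> (Suc t) j p \<le> mub L E a pi0 mu0 \<omega> t k p / beta L pi0 mu0 \<omega> \<theta>s (Suc t)"
  using mub_trig_le_nb[of t k j p] Zn_ge_beta[of t j] beta_pos[of "Suc t"] mub_pos[of t k p]
  by (meson divide_left_mono less_imp_le mult_pos_pos order.trans Zn_pos)

lemma mub_const:
  assumes "trig a k \<le> t" "t < trig a (Suc k)"
  shows "mub L E a pi0 mu0 \<omega> t j p = mub L E a pi0 mu0 \<omega> (trig a k) j p"
proof -
  have "\<forall>m. trig a k + m < trig a (Suc k) \<longrightarrow> mub L E a pi0 mu0 \<omega> (trig a k + m) j p = mub L E a pi0 mu0 \<omega> (trig a k) j p"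
  proof (intro allI)
    fix m show "trig a k + m < trig a (Suc k) \<longrightarrow> mub L E a pi0 mu0 \<omega> (trig a k + m) j p = mub L E a pi0 mu0 \<omega> (trig a k) j p"
    proof (induction m)
      case (Suc m)
      show ?case
      proof
        assume lt: "trig a k + Suc m < trig a (Suc k)"
        have "Suc (trig a k + m) \<notin> triggers a"
          by (rule not_trigger_between[OF a1, of k]) (use lt in auto)
        then show "mub L E a pi0 mu0 \<omega> (trig a k + Suc m) j p = mub L E a pi0 mu0 \<omega> (trig a k) j p"
          using Suc lt by simp
      qed
    qed simp
  qed
  from this[rule_format, of "t - trig a k"] assms show ?thesis by simp
qed


lemma pib_star_lb:
  assumes slln: "\<And>q \<epsilon>. \<epsilon> > 0 \<Longrightarrow> eventually (\<lambda>n. real n * (KL L S j \<theta>s q - \<epsilon>) \<le> GG L \<omega> \<theta>s j q n) sequentially"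
    and kl: "\<And>q. KL L S j \<theta>s q \<ge> 0"
    and e: "\<epsilon> > 0"
  shows "eventually (\<lambda>t. exp (-\<epsilon> * real t) \<le> pib L pi0 \<omega> t j \<theta>s) sequentially"
proof -
  define C where "C = (\<Sum>q\<in>UNIV. pi0 j q / pi0 j \<theta>s)"
  have C: "C > 0" unfolding C_def using pi0_pos by (intro sum_pos) auto
  have "eventually (\<lambda>t. \<forall>q. real t * (KL L S j \<theta>s q - \<epsilon>/2) \<le> GG L \<omega> \<theta>s j q t) sequentially"
    using e by (intro eventually_all_finite slln) simp
  moreover have "eventually (\<lambda>t. exp (-(\<epsilon>/2) * real t) \<le> 1 / C) sequentially"
    using e C by (intro exp_small) auto
  ultimately show ?thesis
  proof eventually_elim
    case (elim t)
    have G: "- GG L \<omega> \<theta>s j q t \<le> \<epsilon>/2 * real t" for q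
    proof -
      have "real t * (KL L S j \<theta>s q - \<epsilon>/2) = real t * KL L S j \<theta>s q - \<epsilon>/2 * real t"
        by (simp add: algebra_simps)
      moreover have "0 \<le> real t * KL L S j \<theta>s q" using kl[of q] by simp
      ultimately show ?thesis using elim(1)[rule_format, of q] by linarith
    qed
    have "1 = (\<Sum>q\<in>UNIV. pib L pi0 \<omega> t j q)" by (simp add: pib_sum)
    also have "\<dots> = (\<Sum>q\<in>UNIV. pib L pi0 \<omega> t j \<theta>s * ((pi0 j q / pi0 j \<theta>s) * exp (- GG L \<omega> \<theta>s j q t)))"
      by (subst pib_ratio) (simp add: mult.assoc)
    also have "\<dots> \<le> (\<Sum>q\<in>UNIV. pib L pi0 \<omega> t j \<theta>s * ((pi0 j q / pi0 j \<theta>s) * exp (\<epsilon>/2 * real t)))"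
      using pib_pos pi0_pos G by (intro sum_mono mult_left_mono) (auto intro: less_imp_le)
    also have "\<dots> = pib L pi0 \<omega> t j \<theta>s * C * exp (\<epsilon>/2 * real t)"
      by (simp add: C_def sum_distrib_left sum_distrib_right mult.assoc)
    finally have 1: "1 \<le> pib L pi0 \<omega> t j \<theta>s * C * exp (\<epsilon>/2 * real t)" .
    have "exp (-\<epsilon> * real t) = exp (-(\<epsilon>/2) * real t) * exp (-(\<epsilon>/2) * real t)"
      by (simp add: exp_add[symmetric])
    also have "\<dots> \<le> (1 / C) * exp (-(\<epsilon>/2) * real t)"
      using elim(2) by (intro mult_right_mono) auto
    also have "\<dots> \<le> (1 / C) * ((pib L pi0 \<omega> t j \<theta>s * C * exp (\<epsilon>/2 * real t)) * exp (-(\<epsilon>/2) * real t))"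
      using 1 C by (intro mult_left_mono) auto
    also have "\<dots> = pib L pi0 \<omega> t j \<theta>s"
      using C by (simp add: exp_add[symmetric] field_simps)
    finally show ?case .
  qed
qed

lemma beta_lb:
  assumes pl: "\<And>j \<epsilon>. \<epsilon> > 0 \<Longrightarrow> eventually (\<lambda>t. exp (-\<epsilon> * real t) \<le> pib L pi0 \<omega> t j \<theta>s) sequentially"
    and e: "\<epsilon> > 0"
  shows "eventually (\<lambda>t. exp (-\<epsilon> * real t) \<le> beta L pi0 mu0 \<omega> \<theta>s t) sequentially"
proof -
  have "eventually (\<lambda>t. \<forall>j. exp (-\<epsilon> * real t) \<le> pib L pi0 \<omega> t j \<theta>s) sequentially"
    by (intro eventually_all_finite pl e)
  then obtain N where N: "\<And>t j. t \<ge> N \<Longrightarrow> exp (-\<epsilon> * real t) \<le> pib L pi0 \<omega> t j \<theta>s"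
    by (auto simp: eventually_sequentially)
  define N' where "N' = Suc N"
  have fbN: "exp (-\<epsilon> * real t) \<le> fb L pi0 mu0 \<omega> \<theta>s t" if "t \<ge> N'" for t
    using that N unfolding fb_def N'_def by (auto simp: Min_ge_iff)
  define c0 where "c0 = Min (fb L pi0 mu0 \<omega> \<theta>s ` {..N'})"
  have c0: "c0 > 0" unfolding c0_def using fb_pos by (auto simp: Min_gr_iff)
  have "eventually (\<lambda>t. exp (-\<epsilon> * real t) \<le> c0) sequentially" by (rule exp_small[OF e c0])
  moreover have "eventually (\<lambda>t. t \<ge> N') sequentially" by simp
  ultimately show ?thesis
  proof eventually_elim
    case (elim t)
    show ?case unfolding beta_def
    proof (rule Min.boundedI)
      fix x assume "x \<in> fb L pi0 mu0 \<omega> \<theta>s ` {..t}"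
      then obtain s where s: "s \<le> t" and xs: "x = fb L pi0 mu0 \<omega> \<theta>s s" by auto
      show "exp (-\<epsilon> * real t) \<le> x"
      proof (cases "s \<ge> N'")
        case True
        have "exp (-\<epsilon> * real t) \<le> exp (-\<epsilon> * real s)" using s e by (simp add: mult_left_mono)
        then show ?thesis using fbN[OF True] xs by linarith
      next
        case False
        have "c0 \<le> fb L pi0 mu0 \<omega> \<theta>s s" unfolding c0_def using False by (intro Min_le) auto
        then show ?thesis using elim(1) xs by simp
      qed
    qed auto
  qed
qed

lemma pib_theta_ub:
  assumes slln: "\<And>\<epsilon>. \<epsilon> > 0 \<Longrightarrow> eventually (\<lambda>n. real n * (KL L S j \<theta>s q - \<epsilon>) \<le> GG L \<omega> \<theta>s j q n) sequentially"
    and e: "\<epsilon> > 0"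
  shows "eventually (\<lambda>t. pib L pi0 \<omega> t j q \<le> (pi0 j q / pi0 j \<theta>s) * exp (- (KL L S j \<theta>s q - \<epsilon>) * real t)) sequentially"
  using slln[OF e]
proof eventually_elim
  case (elim t)
  have c: "pi0 j q / pi0 j \<theta>s > 0" using pi0_pos by simp
  have "pib L pi0 \<omega> t j q = pib L pi0 \<omega> t j \<theta>s * ((pi0 j q / pi0 j \<theta>s) * exp (- GG L \<omega> \<theta>s j q t))"
    by (subst pib_ratio) (simp add: mult.assoc)
  also have "\<dots> \<le> 1 * ((pi0 j q / pi0 j \<theta>s) * exp (- GG L \<omega> \<theta>s j q t))"
  proof (rule mult_right_mono)
    show "0 \<le> pi0 j q / pi0 j \<theta>s * exp (- GG L \<omega> \<theta>s j q t)" using c by (intro mult_nonneg_nonneg) auto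
  qed (rule pib_le1)
  also have "\<dots> \<le> (pi0 j q / pi0 j \<theta>s) * exp (- (KL L S j \<theta>s q - \<epsilon>) * real t)"
  proof -
    have "exp (- GG L \<omega> \<theta>s j q t) \<le> exp (- (KL L S j \<theta>s q - \<epsilon>) * real t)"
      using elim by (simp add: algebra_simps)
    from mult_left_mono[OF this, of "pi0 j q / pi0 j \<theta>s"] c show ?thesis by simp
  qed
  finally show ?case .
qed

lemma mub_trig_le_pi_beta': "t \<in> triggers a \<Longrightarrow> t \<ge> 1 \<Longrightarrow>
    mub L E a pi0 mu0 \<omega> t j p \<le> pib L pi0 \<omega> t j p / beta L pi0 mu0 \<omega> \<theta>s t"
  using mub_trig_le_pi_beta[of "t - 1" j p] by simp

lemma Dprop_base:
  assumes ub: "\<And>\<epsilon>. \<epsilon> > 0 \<Longrightarrow> eventually (\<lambda>t. pib L pi0 \<omega> t v \<theta> \<le> c * exp (- (K - \<epsilon>) * real t)) sequentially"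
    and c: "c > 0"
    and blb: "\<And>\<epsilon>. \<epsilon> > 0 \<Longrightarrow> eventually (\<lambda>t. exp (-\<epsilon> * real t) \<le> beta L pi0 mu0 \<omega> \<theta>s t) sequentially"
  shows "Dprop L E a pi0 mu0 \<omega> \<theta> K v 0"
  unfolding Dprop_def
proof (intro allI impI)
  fix y assume y: "y < K"
  define \<epsilon> where "\<epsilon> = (K - y) / 3"
  have e: "\<epsilon> > 0" using y by (simp add: \<epsilon>_def)
  have "eventually (\<lambda>t. pib L pi0 \<omega> t v \<theta> \<le> c * exp (- (K - \<epsilon>) * real t)) sequentially" by (rule ub[OF e])
  moreover have "eventually (\<lambda>t. exp (-\<epsilon> * real t) \<le> beta L pi0 mu0 \<omega> \<theta>s t) sequentially" by (rule blb[OF e])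
  moreover have "eventually (\<lambda>t. exp (-\<epsilon> * real t) \<le> 1 / c) sequentially" using e c by (intro exp_small) auto
  ultimately have "eventually (\<lambda>t. t \<in> triggers a \<longrightarrow> t \<ge> 1 \<longrightarrow> mub L E a pi0 mu0 \<omega> t v \<theta> \<le> exp (-y * real t)) sequentially"
  proof eventually_elim
    case (elim t)
    show ?case
    proof (intro impI)
      assume tr: "t \<in> triggers a" and t1: "t \<ge> 1"
      have bp: "beta L pi0 mu0 \<omega> \<theta>s t > 0" by (rule beta_pos)
      have "mub L E a pi0 mu0 \<omega> t v \<theta> \<le> pib L pi0 \<omega> t v \<theta> / beta L pi0 mu0 \<omega> \<theta>s t"
        by (rule mub_trig_le_pi_beta'[OF tr t1])
      also have "\<dots> \<le> c * exp (- (K - \<epsilon>) * real t) / exp (-\<epsilon> * real t)"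
        using elim(1,2) bp pib_pos[of t v \<theta>] c by (intro frac_le) auto
      also have "\<dots> = (c * exp (-\<epsilon> * real t)) * exp (-y * real t)"
      proof -
        have "- (K - \<epsilon>) * real t - (-\<epsilon> * real t) = -\<epsilon> * real t + -y * real t"
          by (simp add: \<epsilon>_def field_simps)
        then have "exp (- (K - \<epsilon>) * real t) / exp (-\<epsilon> * real t) = exp (-\<epsilon> * real t) * exp (-y * real t)"
          by (simp only: exp_diff[symmetric] exp_add[symmetric])
        then show ?thesis by (metis (no_types) times_divide_eq_right mult.assoc)
      qed
      also have "\<dots> \<le> 1 * exp (-y * real t)"
        using elim(3) c by (intro mult_right_mono) (auto simp: field_simps)
      finally show "mub L E a pi0 mu0 \<omega> t v \<theta> \<le> exp (-y * real t)" by simp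
    qed
  qed
  then obtain N where N: "\<And>t. t \<ge> N \<Longrightarrow> t \<in> triggers a \<Longrightarrow> t \<ge> 1 \<Longrightarrow> mub L E a pi0 mu0 \<omega> t v \<theta> \<le> exp (-y * real t)"
    by (auto simp: eventually_sequentially)
  show "eventually (\<lambda>k. \<forall>t. trig a (k + 0) \<le> t \<and> t < trig a (Suc (k + 0)) \<longrightarrow> mub L E a pi0 mu0 \<omega> t v \<theta> \<le> exp (-y * real (trig a k))) sequentially"
    unfolding eventually_sequentially
  proof (intro exI allI impI)
    fix k t assume k: "N \<le> k" and t: "trig a (k + 0) \<le> t \<and> t < trig a (Suc (k + 0))"
    have "mub L E a pi0 mu0 \<omega> t v \<theta> = mub L E a pi0 mu0 \<omega> (trig a k) v \<theta>"
      using t by (intro mub_const) auto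
    also have "\<dots> \<le> exp (-y * real (trig a k))"
      using k trig_ge_k[OF a1, of k] trig_ge1[of a k] by (intro N) (auto simp: trig_in_triggers)
    finally show "mub L E a pi0 mu0 \<omega> t v \<theta> \<le> exp (-y * real (trig a k))" .
  qed
qed

lemma Dprop_step:
  assumes a2: "a \<ge> 2"
    and D: "Dprop L E a pi0 mu0 \<omega> \<theta> K j' d"
    and nb: "j' \<in> neighbors E j"
    and blb: "\<And>\<epsilon>. \<epsilon> > 0 \<Longrightarrow> eventually (\<lambda>t. exp (-\<epsilon> * real t) \<le> beta L pi0 mu0 \<omega> \<theta>s t) sequentially"
  shows "Dprop L E a pi0 mu0 \<omega> \<theta> K j (Suc d)"
  unfolding Dprop_def
proof (intro allI impI)
  fix y assume y: "y < K"
  define y' where "y' = (y + K) / 2"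
  have yy: "y < y'" "y' < K" using y by (auto simp: y'_def)
  define Cd where "Cd = real a ^ Suc d + real (trig a (Suc d))"
  have Cd: "Cd > 0" unfolding Cd_def using a2 by (simp add: add_pos_nonneg)
  define \<epsilon> where "\<epsilon> = (y' - y) / Cd"
  have e: "\<epsilon> > 0" using yy Cd by (simp add: \<epsilon>_def)
  have "eventually (\<lambda>k. \<forall>t. trig a (k+d) \<le> t \<and> t < trig a (Suc (k+d)) \<longrightarrow> mub L E a pi0 mu0 \<omega> t j' \<theta> \<le> exp (-y' * real (trig a k))) sequentially"
    using D yy unfolding Dprop_def by blast
  then obtain N1 where N1: "\<And>k t. k \<ge> N1 \<Longrightarrow> trig a (k+d) \<le> t \<Longrightarrow> t < trig a (Suc (k+d)) \<Longrightarrow> mub L E a pi0 mu0 \<omega> t j' \<theta> \<le> exp (-y' * real (trig a k))"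
    by (auto simp: eventually_sequentially)
  obtain N2 where N2: "\<And>t. t \<ge> N2 \<Longrightarrow> exp (-\<epsilon> * real t) \<le> beta L pi0 mu0 \<omega> \<theta>s t"
    using blb[OF e] by (auto simp: eventually_sequentially)
  show "eventually (\<lambda>k. \<forall>t. trig a (k + Suc d) \<le> t \<and> t < trig a (Suc (k + Suc d)) \<longrightarrow> mub L E a pi0 mu0 \<omega> t j \<theta> \<le> exp (-y * real (trig a k))) sequentially"
    unfolding eventually_sequentially
  proof (intro exI[of _ "max N1 N2"] allI impI)
    fix k t assume k: "max N1 N2 \<le> k" and t: "trig a (k + Suc d) \<le> t \<and> t < trig a (Suc (k + Suc d))"
    define T where "T = trig a (k + Suc d)"
    have T1: "T \<ge> 1" unfolding T_def by (rule trig_ge1)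
    have Tsuc: "Suc (T - 1) = T" using T1 by simp
    have Ttr: "Suc (T - 1) \<in> triggers a" by (metis Tsuc T_def trig_in_triggers)
    have p: "1 \<le> a ^ Suc (k+d)" by (rule one_le_power[OF a1])
    have TT: "T = trig a (k+d) + a ^ Suc (k+d)" unfolding T_def by simp
    have TS: "trig a (Suc (k + d)) = T" unfolding T_def by simp
    have win: "trig a (k + d) \<le> T - 1" "T - 1 < trig a (Suc (k + d))"
      using p TT by arith (use T1 TS in simp)
    have m1: "mub L E a pi0 mu0 \<omega> (T - 1) j' \<theta> \<le> exp (-y' * real (trig a k))"
      using k win by (intro N1) auto
    have TN2: "T \<ge> N2" using k trig_ge_k[OF a1, of "k + Suc d"] unfolding T_def by simp
    have b: "exp (-\<epsilon> * real T) \<le> beta L pi0 mu0 \<omega> \<theta>s T" by (rule N2[OF TN2])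
    have Tle: "real T \<le> Cd * real (trig a k)"
    proof -
      have "real T \<le> real a ^ Suc d * real (trig a k) + real (trig a (Suc d))"
        unfolding T_def by (rule trig_shift_le[OF a2])
      also have "\<dots> \<le> real a ^ Suc d * real (trig a k) + real (trig a (Suc d)) * real (trig a k)"
      proof (intro add_left_mono)
        have "real (trig a (Suc d)) * 1 \<le> real (trig a (Suc d)) * real (trig a k)"
          using trig_ge1[of a k] by (intro mult_left_mono) auto
        then show "real (trig a (Suc d)) \<le> real (trig a (Suc d)) * real (trig a k)" by simp
      qed
      finally show ?thesis by (simp add: Cd_def algebra_simps)
    qed
    have "mub L E a pi0 mu0 \<omega> t j \<theta> = mub L E a pi0 mu0 \<omega> T j \<theta>"
      unfolding T_def using t by (intro mub_const) auto
    also have "\<dots> \<le> mub L E a pi0 mu0 \<omega> (T - 1) j' \<theta> / beta L pi0 mu0 \<omega> \<theta>s T"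
      using mub_trig_le_nb_beta[OF Ttr nb, of \<theta>] Tsuc by simp
    also have "\<dots> \<le> exp (-y' * real (trig a k)) / exp (-\<epsilon> * real T)"
      using m1 b mub_pos[of "T - 1" j' \<theta>] by (intro frac_le) auto
    also have "\<dots> = exp (-y' * real (trig a k) + \<epsilon> * real T)"
      by (simp add: exp_diff[symmetric])
    also have "\<dots> \<le> exp (-y * real (trig a k))"
    proof -
      have "\<epsilon> * real T \<le> \<epsilon> * (Cd * real (trig a k))" using Tle e by (intro mult_left_mono) auto
      also have "\<dots> = (y' - y) * real (trig a k)" using Cd by (simp add: \<epsilon>_def)
      finally show ?thesis by (simp add: algebra_simps)
    qed
    finally show "mub L E a pi0 mu0 \<omega> t j \<theta> \<le> exp (-y * real (trig a k))" .
  qed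
qed


lemma Dprop_path:
  assumes a2: "a \<ge> 2"
    and base: "Dprop L E a pi0 mu0 \<omega> \<theta> K v 0"
    and blb: "\<And>\<epsilon>. \<epsilon> > 0 \<Longrightarrow> eventually (\<lambda>t. exp (-\<epsilon> * real t) \<le> beta L pi0 mu0 \<omega> \<theta>s t) sequentially"
  shows "(v, j) \<in> E ^^ d \<Longrightarrow> Dprop L E a pi0 mu0 \<omega> \<theta> K j d"
proof (induction d arbitrary: j)
  case 0 then show ?case using base by simp
next
  case (Suc d)
  then obtain j' where j': "(v, j') \<in> E ^^ d" "(j', j) \<in> E" by auto
  have nb: "j' \<in> neighbors E j" using j'(2) by (simp add: neighbors_def)
  show ?case by (rule Dprop_step[OF a2 Suc.IH[OF j'(1)] nb blb])
qed

lemma Dprop_liminf: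
  assumes a2: "a \<ge> 2" and Dp: "Dprop L E a pi0 mu0 \<omega> \<theta> K i d" and K: "K > 0"
  shows "liminf (\<lambda>t. ereal (- ln (mub L E a pi0 mu0 \<omega> t i \<theta>) / real t)) \<ge> ereal (K / real a ^ (d + 1))"
proof (subst le_Liminf_iff, intro allI impI)
  define A where "A = real a ^ Suc d"
  have A: "A > 0" unfolding A_def using a2 by simp
  fix z assume z: "z < ereal (K / real a ^ (d + 1))"
  from ereal_dense2[OF z] obtain r0 where r00: "z < ereal r0" "ereal r0 < ereal (K / real a ^ (d + 1))" by blast
  have r0: "z < ereal r0" "ereal r0 < ereal (K / A)" using r00 by (simp_all add: A_def)
  define r where "r = max r0 (K / A / 2)"
  have KA: "K / A > 0" using K A by simp
  have r1: "z < ereal r" using r0(1) by (rule order.strict_trans2) (simp add: r_def)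
  have r2: "r < K / A" using r0(2) KA by (simp add: r_def)
  have r3: "r > 0" using KA by (simp add: r_def)
  note r = r1 r2 r3
  have rA: "r * A < K" using r(2) A by (simp add: field_simps)
  define y where "y = (K + r * A) / 2"
  have y: "y < K" "r * A < y" using rA by (auto simp: y_def mult.commute)
  define c where "c = real (trig a (Suc d))"
  define \<delta> where "\<delta> = y - r * A"
  have \<delta>: "\<delta> > 0" using y by (simp add: \<delta>_def)
  obtain N where N: "\<And>k t. k \<ge> N \<Longrightarrow> trig a (k+d) \<le> t \<Longrightarrow> t < trig a (Suc (k+d)) \<Longrightarrow> mub L E a pi0 mu0 \<omega> t i \<theta> \<le> exp (-y * real (trig a k))"
    using Dp y(1) unfolding Dprop_def eventually_sequentially by blast
  define N' where "N' = max N (nat \<lceil>r * c / \<delta>\<rceil>)"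
  have ev: "eventually (\<lambda>t. t \<ge> trig a (N' + d)) sequentially" by simp
  show "\<forall>\<^sub>F t in sequentially. z < ereal (- ln (mub L E a pi0 mu0 \<omega> t i \<theta>) / real t)"
    using ev
  proof eventually_elim
    case (elim t)
    have t1: "t \<ge> 1" using elim trig_ge1[of a "N' + d"] by linarith
    obtain k' where k': "trig a k' \<le> t" "t < trig a (Suc k')" using trig_window_exists[OF a1 t1] by blast
    have sm: "strict_mono (trig a)" using a2 by (intro trig_strict_mono) auto
    have kk: "k' \<ge> N' + d"
    proof (rule ccontr)
      assume "\<not> k' \<ge> N' + d"
      then have "Suc k' \<le> N' + d" by simp
      then have "trig a (Suc k') \<le> trig a (N' + d)" by (simp add: strict_mono_less_eq[OF sm] del: trig.simps)
      then show False using k' elim by linarith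
    qed
    define k where "k = k' - d"
    have kd: "k' = k + d" and kN: "k \<ge> N'" using kk by (auto simp: k_def)
    have mu: "mub L E a pi0 mu0 \<omega> t i \<theta> \<le> exp (-y * real (trig a k))"
      using k' kN by (intro N) (auto simp: kd N'_def)
    have mpos: "mub L E a pi0 mu0 \<omega> t i \<theta> > 0" by (rule mub_pos)
    have lnb: "y * real (trig a k) \<le> - ln (mub L E a pi0 mu0 \<omega> t i \<theta>)"
    proof -
      have "ln (mub L E a pi0 mu0 \<omega> t i \<theta>) \<le> ln (exp (-y * real (trig a k)))"
        using mu mpos by (subst ln_le_cancel_iff) auto
      then show ?thesis by simp
    qed
    have tk: "real t < A * real (trig a k) + c"
    proof -
      have "real t < real (trig a (k + Suc d))" using k'(2) kd by (simp del: trig.simps)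
      also have "\<dots> \<le> A * real (trig a k) + c" unfolding A_def c_def by (rule trig_shift_le[OF a2])
      finally show ?thesis .
    qed
    have kc: "r * c \<le> \<delta> * real (trig a k)"
    proof -
      have "r * c / \<delta> \<le> real (nat \<lceil>r * c / \<delta>\<rceil>)" by linarith
      also have "\<dots> \<le> real k" using kN by (simp add: N'_def)
      also have "\<dots> \<le> real (trig a k)" using trig_ge_k[of a k] a2 by simp
      finally show ?thesis using \<delta> by (simp add: divide_le_eq mult.commute)
    qed
    have "r * real t < r * (A * real (trig a k) + c)" using tk r(3) by simp
    also have "\<dots> = r * A * real (trig a k) + r * c" by (simp add: algebra_simps)
    also have "\<dots> \<le> r * A * real (trig a k) + \<delta> * real (trig a k)" using kc by simp
    also have "\<dots> = y * real (trig a k)" by (simp add: \<delta>_def algebra_simps)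
    also have "\<dots> \<le> - ln (mub L E a pi0 mu0 \<omega> t i \<theta>)" by (rule lnb)
    finally have "r < - ln (mub L E a pi0 mu0 \<omega> t i \<theta>) / real t" using t1 by (simp add: field_simps)
    then have "ereal r < ereal (- ln (mub L E a pi0 mu0 \<omega> t i \<theta>) / real t)" by simp
    with r(1) show ?case by (rule order.strict_trans)
  qed
qed

lemma main_det:
  assumes a2: "a \<ge> 2"
    and slln: "\<And>j q \<epsilon>. \<epsilon> > 0 \<Longrightarrow> eventually (\<lambda>n. real n * (KL L S j \<theta>s q - \<epsilon>) \<le> GG L \<omega> \<theta>s j q n) sequentially"
    and kl: "\<And>j q. KL L S j \<theta>s q \<ge> 0"
    and Kpos: "KL L S v \<theta>s \<theta> > 0"
    and path: "(v, i) \<in> E ^^ d"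
  shows "liminf (\<lambda>t. ereal (- ln (mub L E a pi0 mu0 \<omega> t i \<theta>) / real t)) \<ge> ereal (KL L S v \<theta>s \<theta> / real a ^ (d + 1))"
proof -
  have pl: "eventually (\<lambda>t. exp (-\<epsilon> * real t) \<le> pib L pi0 \<omega> t j \<theta>s) sequentially" if "\<epsilon> > 0" for j \<epsilon>
    by (rule pib_star_lb[OF slln kl that])
  have blb: "eventually (\<lambda>t. exp (-\<epsilon> * real t) \<le> beta L pi0 mu0 \<omega> \<theta>s t) sequentially" if "\<epsilon> > 0" for \<epsilon>
    by (rule beta_lb[OF pl that])
  have ub: "eventually (\<lambda>t. pib L pi0 \<omega> t v \<theta> \<le> (pi0 v \<theta> / pi0 v \<theta>s) * exp (- (KL L S v \<theta>s \<theta> - \<epsilon>) * real t)) sequentially"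
    if "\<epsilon> > 0" for \<epsilon>
    by (rule pib_theta_ub[OF slln that])
  have c: "pi0 v \<theta> / pi0 v \<theta>s > 0" using pi0_pos by simp
  have base: "Dprop L E a pi0 mu0 \<omega> \<theta> (KL L S v \<theta>s \<theta>) v 0"
    by (rule Dprop_base[OF ub c blb])
  have "Dprop L E a pi0 mu0 \<omega> \<theta> (KL L S v \<theta>s \<theta>) i d"
    by (rule Dprop_path[OF a2 base blb path])
  then show ?thesis by (rule Dprop_liminf[OF a2 _ Kpos])
qed

end



lemma marg_sum1:
  assumes fin_S: "\<And>j. finite (S j)" and supp: "\<And>h. set_pmf (L h) \<subseteq> Pi UNIV S"
  shows "(\<Sum>w\<in>S j. marg L j w h) = 1"
  unfolding marg_def
proof (rule sum_pmf_eq_1)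
  show "finite (S j)" by (rule fin_S)
  show "set_pmf (map_pmf (\<lambda>f. f j) (L h)) \<subseteq> S j" using supp[of h] by auto
qed

lemma KL_nonneg:
  assumes fin_S: "\<And>j. finite (S j)" and supp: "\<And>h. set_pmf (L h) \<subseteq> Pi UNIV S"
    and pos_lik: "\<And>j w h. w \<in> S j \<Longrightarrow> marg L j w h > 0"
  shows "KL L S j p q \<ge> 0"
proof -
  have "(\<Sum>w\<in>S j. marg L j w p - marg L j w q) \<le> KL L S j p q"
    unfolding KL_def
  proof (rule sum_mono)
    fix w assume w: "w \<in> S j"
    have P: "marg L j w p > 0" and Q: "marg L j w q > 0" using pos_lik[OF w] by auto
    have "ln (marg L j w q / marg L j w p) \<le> marg L j w q / marg L j w p - 1"
      using P Q by (intro ln_le_minus_one) auto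
    then have h: "1 - marg L j w q / marg L j w p \<le> ln (marg L j w p / marg L j w q)"
      using P Q by (simp add: ln_div)
    have eq: "marg L j w p * (1 - marg L j w q / marg L j w p) = marg L j w p - marg L j w q"
      using P by (simp add: field_simps)
    from mult_left_mono[OF h, of "marg L j w p"] P eq
    show "marg L j w p - marg L j w q \<le> marg L j w p * ln (marg L j w p / marg L j w q)"
      by simp
  qed
  also have "(\<Sum>w\<in>S j. marg L j w p - marg L j w q) = 0"
    by (simp add: sum_subtractf marg_sum1[OF fin_S supp])
  finally show ?thesis by simp
qed

lemma expect_KL:
  assumes fin_S: "\<And>j. finite (S j)" and supp: "\<And>h. set_pmf (L h) \<subseteq> Pi UNIV S"
  shows "measure_pmf.expectation (L p) (\<lambda>f. ln (marg L j (f j) p / marg L j (f j) q)) = KL L S j p q"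
proof -
  have "measure_pmf.expectation (L p) (\<lambda>f. ln (marg L j (f j) p / marg L j (f j) q))
      = measure_pmf.expectation (map_pmf (\<lambda>f. f j) (L p)) (\<lambda>w. ln (marg L j w p / marg L j w q))"
    by simp
  also have "\<dots> = (\<Sum>w\<in>S j. pmf (map_pmf (\<lambda>f. f j) (L p)) w *\<^sub>R ln (marg L j w p / marg L j w q))"
    by (rule integral_measure_pmf[OF fin_S]) (use supp[of p] in auto)
  also have "\<dots> = KL L S j p q" by (simp add: KL_def marg_def)
  finally show ?thesis .
qed

lemma finite_set_pmf_L:
  assumes fin_S: "\<And>j. finite (S j)" and supp: "\<And>h. set_pmf (L h) \<subseteq> Pi UNIV (S :: 'v::finite \<Rightarrow> 's set)"
  shows "finite (set_pmf (L h))"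
proof (rule finite_subset[OF supp])
  have "finite (Pi\<^sub>E UNIV S)" using fin_S by (intro finite_PiE) auto
  then show "finite (Pi UNIV S)" by (simp add: PiE_UNIV_domain)
qed

theorem lemma3:
  fixes L :: "'h::finite \<Rightarrow> ('v::finite \<Rightarrow> 's) pmf"
    and S :: "'v \<Rightarrow> 's set"
    and E :: "('v \<times> 'v) set"
    and a :: nat
    and pi0 mu0 :: "'v \<Rightarrow> 'h \<Rightarrow> real"
    and \<theta>star \<theta> :: 'h
    and v i :: 'v
  assumes fin_S: "\<And>j. finite (S j)"
    and supp: "\<And>h. set_pmf (L h) \<subseteq> Pi UNIV S"
    and pos_lik: "\<And>j w h. w \<in> S j \<Longrightarrow> marg L j w h > 0"
    and a2: "a \<ge> 2"
    and ident: "\<And>p q. p \<noteq> q \<Longrightarrow> informative L S p q \<noteq> {}"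
    and sc: "strongly_connected E"
    and pi0_pos: "\<And>j h. pi0 j h > 0" and pi0_sum: "\<And>j. (\<Sum>h\<in>UNIV. pi0 j h) = 1"
    and mu0_pos: "\<And>j h. mu0 j h > 0" and mu0_sum: "\<And>j. (\<Sum>h\<in>UNIV. mu0 j h) = 1"
    and neq: "\<theta> \<noteq> \<theta>star"
    and v_inf: "v \<in> informative L S \<theta>star \<theta>"
  shows "AE \<omega> in iid_law (L \<theta>star).
           liminf (\<lambda>t. ereal (- ln (mub L E a pi0 mu0 \<omega> t i \<theta>) / real t))
             \<ge> ereal (KL L S v \<theta>star \<theta> / real a ^ (dist_g E v i + 1))"
proof -
  let ?M = "PiM UNIV (\<lambda>_::nat. measure_pmf (L \<theta>star))"
  have finP: "finite (set_pmf (L \<theta>star))" by (rule finite_set_pmf_L[OF fin_S supp])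
  have AE1: "AE \<omega> in ?M. \<forall>t. \<omega> t \<in> Pi UNIV S"
  proof (subst AE_all_countable, intro allI)
    fix t :: nat
    have "AE x in measure_pmf (L \<theta>star). x \<in> Pi UNIV S"
      using supp[of \<theta>star] by (auto simp: AE_measure_pmf_iff)
    then show "AE \<omega> in ?M. \<omega> t \<in> Pi UNIV S"
      by (rule AE_PiM_component[where I=UNIV and M="\<lambda>_. measure_pmf (L \<theta>star)", rotated 2])
         (simp_all add: measure_pmf.prob_space_axioms)
  qed
  have AE2: "AE \<omega> in ?M. \<forall>j q. \<forall>\<epsilon>>0. eventually (\<lambda>n. real n * (KL L S j \<theta>star q - \<epsilon>) \<le> GG L \<omega> \<theta>star j q n) sequentially"
  proof (intro eventually_all_finite)
    fix j q
    show "AE \<omega> in ?M. \<forall>\<epsilon>>0. eventually (\<lambda>n. real n * (KL L S j \<theta>star q - \<epsilon>) \<le> GG L \<omega> \<theta>star j q n) sequentially"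
    proof -
      have e: "measure_pmf.expectation (L \<theta>star) (\<lambda>f. ln (marg L j (f j) \<theta>star / marg L j (f j) q)) = KL L S j \<theta>star q"
        by (rule expect_KL[OF fin_S supp])
      show ?thesis
        using slln_lower[OF finP, of "\<lambda>f. ln (marg L j (f j) \<theta>star / marg L j (f j) q)"]
        unfolding e GG_def by simp
    qed
  qed
  have path: "(v, i) \<in> E ^^ dist_g E v i"
  proof -
    have "\<exists>n. (v, i) \<in> E ^^ n" using sc unfolding strongly_connected_def by (simp add: rtrancl_power)
    then show ?thesis unfolding dist_g_def by (rule LeastI_ex)
  qed
  have Kpos: "KL L S v \<theta>star \<theta> > 0" using v_inf by (simp add: informative_def)
  show ?thesis unfolding iid_law_def
    using AE1 AE2
  proof eventually_elim
    case (elim \<omega>)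
    have good: "\<And>t j. \<omega> t j \<in> S j" using elim(1) by auto
    show ?case
      by (rule main_det[OF good pos_lik pi0_pos pi0_sum mu0_pos _ a2 _ _ Kpos path])
         (use a2 elim(2) KL_nonneg[OF fin_S supp pos_lik] in auto)
  qed
qed


end
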